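(* Let $k>t+1$, $n>2k-t$, and let $\mathcal{S}_a$ be a maximal set of $k$-spaces in $\mathrm{AG}(n,q)$ pairwise intersecting in at least a $t$-space. Let $\psi(\mathcal{S}_a)=\min\{\dim T: T\text{ an affine subspace of }\mathrm{AG}(n,q),\ \dim(T\cap\alpha)\geq t\ \forall\alpha\in\mathcal{S}_a\}$ and let $\mathcal{T}$ be the set of all affine $\psi(\mathcal{S}_a)$-dimensional subspaces meeting every element of $\mathcal{S}_a$ in at least a $t$-space. Then: (1) $t\leq\psi(\mathcal{S}_a)\leq k$, and if $\psi(\mathcal{S}_a)=t$ then $\mathcal{S}_a$ is a $t$-pencil; (2) if $T\in\mathcal{T}$, all affine $k$-spaces containing $T$ belong to $\mathcal{S}_a$; (3) any two elements of $\mathcal{T}$ intersect (in $\mathrm{AG}(n,q)$) in at least a $t$-space.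
   Context: Affine subspaces intersect in at least a $t$-space if their affine intersection has dimension at least $t$. A $t$-pencil is the set of all affine $k$-spaces through a fixed affine $t$-space. Maximal means no further affine $k$-space can be added keeping the property. *)

theory Defs
  imports "HOL-Analysis.Analysis"
begin

text \<open>The affine space AG(n,q): points are vectors in 'a^'n, where 'a is a finite
field (q = CARD('a)) and n = CARD('n).\<close>

definition aff_subspace :: "('a::field ^ 'n) set \<Rightarrow> bool" where
  "aff_subspace S \<longleftrightarrow> (\<exists>x V. vec.subspace V \<and> S = (\<lambda>v. x + v) ` V)"

definition aff_dimension :: "('a::field ^ 'n) set \<Rightarrow> nat" where
  "aff_dimension S = vec.dim {a - b | a b. a \<in> S \<and> b \<in> S}"

definition kspace :: "nat \<Rightarrow> ('a::field ^ 'n) set \<Rightarrow> bool" where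
  "kspace k S \<longleftrightarrow> aff_subspace S \<and> aff_dimension S = k"

definition meets_in :: "nat \<Rightarrow> ('a::field ^ 'n) set \<Rightarrow> ('a ^ 'n) set \<Rightarrow> bool" where
  "meets_in t A B \<longleftrightarrow> A \<inter> B \<noteq> {} \<and> aff_dimension (A \<inter> B) \<ge> t"

definition pencil :: "nat \<Rightarrow> ('a::field ^ 'n) set \<Rightarrow> ('a ^ 'n) set set" where
  "pencil k P = {A. kspace k A \<and> P \<subseteq> A}"

definition maximal_tint_family :: "nat \<Rightarrow> nat \<Rightarrow> ('a::field ^ 'n) set set \<Rightarrow> bool" where
  "maximal_tint_family k t S \<longleftrightarrow>
     (\<forall>A\<in>S. kspace k A) \<and>
     (\<forall>A\<in>S. \<forall>B\<in>S. meets_in t A B) \<and>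
     (\<forall>A. kspace k A \<and> A \<notin> S \<longrightarrow> (\<exists>B\<in>S. \<not> meets_in t A B))"

definition psi :: "nat \<Rightarrow> ('a::field ^ 'n) set set \<Rightarrow> nat" where
  "psi t S = (LEAST d. \<exists>T. aff_subspace T \<and> aff_dimension T = d \<and> (\<forall>A\<in>S. meets_in t T A))"

definition Tset :: "nat \<Rightarrow> ('a::field ^ 'n) set set \<Rightarrow> ('a ^ 'n) set set" where
  "Tset t S = {T. kspace (psi t S) T \<and> (\<forall>A\<in>S. meets_in t T A)}"

end

theory Submission
  imports Defs
begin

lemma full_dim_eq:
  fixes W :: "('a::field ^ 'n) set"
  assumes "vec.span W = UNIV" shows "vec.dim W = CARD('n)"
  by (metis assms vec.dim_span vec_dim_card)

lemma exists_out:
  fixes W :: "('a::field ^ 'n) set"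
  assumes "vec.dim W < CARD('n)" shows "\<exists>e. e \<notin> vec.span W"
  using full_dim_eq assms by force

lemma insert_dim:
  fixes U :: "('a::field ^ 'n) set"
  assumes "vec.subspace U" "e \<notin> U"
  shows "vec.dim (vec.span (insert e U)) = vec.dim U + 1"
proof -
  have "vec.span U = U" using assms(1) by (simp add: vec.span_eq_iff)
  then show ?thesis using assms(2) vec.dim_insert[of e U] by (metis vec.dim_span)
qed

lemma ext_in:
  fixes U H :: "('a::field ^ 'n) set"
  shows "vec.subspace U \<Longrightarrow> vec.subspace H \<Longrightarrow> U \<subseteq> H \<Longrightarrow> vec.dim U \<le> k \<Longrightarrow> k \<le> vec.dim H
    \<Longrightarrow> \<exists>U'. vec.subspace U' \<and> U \<subseteq> U' \<and> U' \<subseteq> H \<and> vec.dim U' = k"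
proof (induction "k - vec.dim U" arbitrary: U)
  case 0
  then show ?case by (intro exI[of _ U]) auto
next
  case (Suc m)
  have "\<exists>e\<in>H. e \<notin> U"
  proof (rule ccontr)
    assume "\<not> ?thesis"
    then have "H \<subseteq> U" by auto
    then have "vec.dim H \<le> vec.dim U" by (rule vec.dim_subset)
    with Suc show False by auto
  qed
  then obtain e where e: "e \<in> H" "e \<notin> U" by auto
  define U' where "U' = vec.span (insert e U)"
  have s: "vec.subspace U'" unfolding U'_def by simp
  have d: "vec.dim U' = vec.dim U + 1" unfolding U'_def using insert_dim[OF Suc(3) e(2)] .
  have h: "U' \<subseteq> H" unfolding U'_def using Suc e by (intro vec.span_minimal) auto
  have "\<exists>U''. vec.subspace U'' \<and> U' \<subseteq> U'' \<and> U'' \<subseteq> H \<and> vec.dim U'' = k"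
    using Suc(1)[of U'] Suc(2,4,7) s d h by auto
  moreover have "U \<subseteq> U'" unfolding U'_def by (meson subset_insertI vec.span_superset subset_trans)
  ultimately show ?case by blast
qed

lemma ext_avoid:
  fixes S :: "('a::field ^ 'n) set"
  shows "vec.subspace S \<Longrightarrow> v \<notin> S \<Longrightarrow> vec.dim S \<le> m \<Longrightarrow> m < CARD('n)
    \<Longrightarrow> \<exists>H. vec.subspace H \<and> S \<subseteq> H \<and> v \<notin> H \<and> vec.dim H = m"
proof (induction "m - vec.dim S" arbitrary: S)
  case 0
  then show ?case by (intro exI[of _ S]) auto
next
  case (Suc j)
  have "vec.dim (vec.span (insert v S)) = vec.dim S + 1" using insert_dim Suc by blast
  then have "vec.dim (insert v S) < CARD('n)" using Suc by simp
  then obtain e where e: "e \<notin> vec.span (insert v S)" using exists_out[of "insert v S"] by auto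
  have eS: "e \<notin> S" using e by (meson subsetD subset_insertI vec.span_superset)
  define S' where "S' = vec.span (insert e S)"
  have s: "vec.subspace S'" unfolding S'_def by simp
  have d: "vec.dim S' = vec.dim S + 1" unfolding S'_def using insert_dim[OF Suc(3) eS] .
  have v: "v \<notin> S'"
  proof
    assume "v \<in> S'"
    moreover have "v \<notin> vec.span S" using Suc vec.span_eq_iff[of S] by metis
    ultimately have "e \<in> vec.span (insert v S)" unfolding S'_def using vec.in_span_insert by blast
    with e show False by simp
  qed
  have "\<exists>H. vec.subspace H \<and> S' \<subseteq> H \<and> v \<notin> H \<and> vec.dim H = m"
    using Suc(1)[of S'] Suc(2,5,6) s d v by auto
  moreover have "S \<subseteq> S'" unfolding S'_def by (meson subset_insertI vec.span_superset subset_trans)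
  ultimately show ?case by blast
qed

lemma ext_int:
  fixes U1 U2 :: "('a::field ^ 'n) set"
  shows "vec.subspace U1 \<Longrightarrow> vec.subspace U2 \<Longrightarrow> vec.dim U1 \<le> k \<Longrightarrow> k \<le> CARD('n)
    \<Longrightarrow> vec.dim (U1 \<inter> U2) \<le> max w (vec.dim U1 + vec.dim U2 - CARD('n))
    \<Longrightarrow> \<exists>U'. vec.subspace U' \<and> U1 \<subseteq> U' \<and> vec.dim U' = k
         \<and> vec.dim (U' \<inter> U2) \<le> max w (k + vec.dim U2 - CARD('n))"
proof (induction "k - vec.dim U1" arbitrary: U1)
  case 0
  then show ?case by (intro exI[of _ U1]) auto
next
  case (Suc m)
  define Sm where "Sm = {x + y |x y. x \<in> U1 \<and> y \<in> U2}"
  have Sms: "vec.subspace Sm" unfolding Sm_def using Suc by (simp add: vec.subspace_sums)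
  have gr: "vec.dim Sm + vec.dim (U1 \<inter> U2) = vec.dim U1 + vec.dim U2"
    unfolding Sm_def using Suc vec.dim_sums_Int by blast
  obtain U' e where U'def: "U' = vec.span (insert e U1)" and eU: "e \<notin> U1"
    and cond: "vec.dim (U' \<inter> U2) \<le> max w (vec.dim U' + vec.dim U2 - CARD('n))"
  proof (cases "Sm = UNIV")
    case False
    then obtain e where e: "e \<notin> Sm" by auto
    have eU: "e \<notin> U1"
    proof
      assume "e \<in> U1" then have "e + 0 \<in> Sm" unfolding Sm_def using Suc vec.subspace_0 by blast
      with e show False by simp
    qed
    define U' where "U' = vec.span (insert e U1)"
    have "U' \<inter> U2 \<subseteq> U1 \<inter> U2"
    proof
      fix y assume y: "y \<in> U' \<inter> U2"
      then obtain c where c: "y - c *s e \<in> vec.span U1" unfolding U'_def vec.span_insert by auto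
      have spU: "vec.span U1 = U1" using Suc vec.span_eq_iff by blast
      show "y \<in> U1 \<inter> U2"
      proof (cases "c = 0")
        case True then show ?thesis using c y spU by simp
      next
        case False
        have "e = (- (inverse c *s (y - c *s e))) + inverse c *s y"
          using False by (simp add: vec_eq_iff field_simps)
        moreover have "inverse c *s (y - c *s e) \<in> U1"
          using c spU vec.subspace_scale[OF Suc(3), of "y - c *s e" "inverse c"] by argo
        then have "- (inverse c *s (y - c *s e)) \<in> U1"
          using vec.subspace_neg[OF Suc(3)] by blast
        moreover have "inverse c *s y \<in> U2" using y Suc(4) by (metis IntD2 vec.subspace_scale)
        ultimately have "e \<in> Sm" unfolding Sm_def by blast
        with e show ?thesis by simp
      qed
    qed
    then have "vec.dim (U' \<inter> U2) \<le> vec.dim (U1 \<inter> U2)" by (rule vec.dim_subset)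
    moreover have "vec.dim U' = vec.dim U1 + 1" unfolding U'_def using insert_dim Suc eU by blast
    ultimately have "vec.dim (U' \<inter> U2) \<le> max w (vec.dim U' + vec.dim U2 - CARD('n))"
      using Suc(7) by linarith
    then show ?thesis by (rule that[OF U'_def eU])
  next
    case True
    have "vec.dim U1 < CARD('n)" using Suc by linarith
    then obtain e where e: "e \<notin> vec.span U1" using exists_out by blast
    have eU: "e \<notin> U1" using e vec.span_superset by blast
    define U' where "U' = vec.span (insert e U1)"
    have U's: "vec.subspace U'" unfolding U'_def by simp
    have dU': "vec.dim U' = vec.dim U1 + 1" unfolding U'_def using insert_dim Suc eU by blast
    have "U1 \<subseteq> U'" unfolding U'_def by (meson subset_insertI vec.span_superset subset_trans)
    then have "Sm \<subseteq> {x + y |x y. x \<in> U' \<and> y \<in> U2}"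
      unfolding Sm_def by blast
    then have "{x + y |x y. x \<in> U' \<and> y \<in> U2} = UNIV" using True by auto
    then have "vec.dim {x + y |x y. x \<in> U' \<and> y \<in> U2} = CARD('n)" using vec_dim_card by metis
    moreover have "vec.dim {x + y |x y. x \<in> U' \<and> y \<in> U2} + vec.dim (U' \<inter> U2) = vec.dim U' + vec.dim U2"
      using U's Suc vec.dim_sums_Int by blast
    ultimately have "vec.dim (U' \<inter> U2) \<le> max w (vec.dim U' + vec.dim U2 - CARD('n))"
      by linarith
    then show ?thesis by (rule that[OF U'_def eU])
  qed
  have U's: "vec.subspace U'" unfolding U'def by simp
  have dU': "vec.dim U' = vec.dim U1 + 1" unfolding U'def using insert_dim Suc eU by blast
  have "\<exists>U''. vec.subspace U'' \<and> U' \<subseteq> U'' \<and> vec.dim U'' = k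
         \<and> vec.dim (U'' \<inter> U2) \<le> max w (k + vec.dim U2 - CARD('n))"
    using Suc(1)[of U'] Suc(2,4,5,6) U's dU' cond by auto
  moreover have "U1 \<subseteq> U'" unfolding U'def by (meson subset_insertI vec.span_superset subset_trans)
  ultimately show ?case by blast
qed

lemma case_one:
  fixes D1 D2 :: "('a::field ^ 'n) set"
  assumes "vec.subspace D1" "vec.subspace D2" "vec.dim D1 \<le> k" "vec.dim D2 \<le> k" "k \<le> CARD('n)"
    "vec.dim (D1 \<inter> D2) < t" "2 * k < CARD('n) + t"
  shows "\<exists>U1 U2. vec.subspace U1 \<and> vec.subspace U2 \<and> D1 \<subseteq> U1 \<and> D2 \<subseteq> U2 \<and>
     vec.dim U1 = k \<and> vec.dim U2 = k \<and> vec.dim (U1 \<inter> U2) < t"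
proof -
  obtain U1 where U1: "vec.subspace U1" "D1 \<subseteq> U1" "vec.dim U1 = k"
    "vec.dim (U1 \<inter> D2) \<le> max (vec.dim (D1 \<inter> D2)) (k + vec.dim D2 - CARD('n))"
    using ext_int[of D1 D2 k "vec.dim (D1 \<inter> D2)"] assms by auto
  obtain U2 where U2: "vec.subspace U2" "D2 \<subseteq> U2" "vec.dim U2 = k"
    "vec.dim (U2 \<inter> U1) \<le> max (vec.dim (U1 \<inter> D2)) (k + vec.dim U1 - CARD('n))"
    using ext_int[of D2 U1 k "vec.dim (U1 \<inter> D2)"] assms U1 by (auto simp: Int_commute)
  have "vec.dim (U2 \<inter> U1) < t"
    using U1(3,4) U2(4) assms(4,6,7) by arith
  then have "vec.dim (U1 \<inter> U2) < t" by (simp add: Int_commute)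
  then show ?thesis using U1 U2 by blast
qed


lemma dir_translate:
  fixes V :: "('a::field ^ 'n) set"
  assumes "vec.subspace V"
  shows "{a - b | a b. a \<in> (\<lambda>v. x + v) ` V \<and> b \<in> (\<lambda>v. x + v) ` V} = V"
proof
  show "{a - b | a b. a \<in> (\<lambda>v. x + v) ` V \<and> b \<in> (\<lambda>v. x + v) ` V} \<subseteq> V"
    using vec.subspace_diff[OF assms] by auto
  show "V \<subseteq> {a - b | a b. a \<in> (\<lambda>v. x + v) ` V \<and> b \<in> (\<lambda>v. x + v) ` V}"
  proof
    fix v assume v: "v \<in> V"
    have "v = (x + v) - (x + 0)" by simp
    moreover have "x + 0 \<in> (\<lambda>v. x + v) ` V" using vec.subspace_0[OF assms] by blast
    ultimately show "v \<in> {a - b | a b. a \<in> (\<lambda>v. x + v) ` V \<and> b \<in> (\<lambda>v. x + v) ` V}"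
      using v by blast
  qed
qed

lemma aff_dim_translate:
  fixes V :: "('a::field ^ 'n) set"
  assumes "vec.subspace V"
  shows "aff_dimension ((\<lambda>v. x + v) ` V) = vec.dim V"
  unfolding aff_dimension_def using dir_translate[OF assms] by simp

lemma aff_dim_mono:
  fixes A B :: "('a::field ^ 'n) set"
  assumes "A \<subseteq> B" shows "aff_dimension A \<le> aff_dimension B"
  unfolding aff_dimension_def by (rule vec.dim_subset) (use assms in blast)

lemma aff_rebase:
  fixes S :: "('a::field ^ 'n) set"
  assumes "aff_subspace S" "p \<in> S"
  shows "\<exists>V. vec.subspace V \<and> S = (\<lambda>v. p + v) ` V"
proof -
  obtain x V where V: "vec.subspace V" "S = (\<lambda>v. x + v) ` V"
    using assms(1) unfolding aff_subspace_def by blast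
  then obtain u where u: "u \<in> V" "p = x + u" using assms(2) by blast
  have "(\<lambda>v. x + v) ` V = (\<lambda>v. p + v) ` V"
  proof
    show "(\<lambda>v. x + v) ` V \<subseteq> (\<lambda>v. p + v) ` V"
    proof
      fix y assume "y \<in> (\<lambda>v. x + v) ` V"
      then obtain w where w: "w \<in> V" "y = x + w" by blast
      then have "w - u \<in> V" using vec.subspace_diff[OF V(1)] u by blast
      moreover have "y = p + (w - u)" using w u by simp
      ultimately show "y \<in> (\<lambda>v. p + v) ` V" by blast
    qed
    show "(\<lambda>v. p + v) ` V \<subseteq> (\<lambda>v. x + v) ` V"
    proof
      fix y assume "y \<in> (\<lambda>v. p + v) ` V"
      then obtain w where w: "w \<in> V" "y = p + w" by blast
      then have "u + w \<in> V" using vec.subspace_add[OF V(1)] u by blast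
      moreover have "y = x + (u + w)" using w u by (simp add: add.assoc)
      ultimately show "y \<in> (\<lambda>v. x + v) ` V" by blast
    qed
  qed
  then show ?thesis using V by auto
qed

lemma translate_Int:
  fixes U W :: "('a::field ^ 'n) set"
  shows "(\<lambda>v. p + v) ` U \<inter> (\<lambda>v. p + v) ` W = (\<lambda>v. p + v) ` (U \<inter> W)"
  by (rule image_Int[symmetric]) (simp add: inj_on_def)

lemma aff_sub_eq:
  fixes T A :: "('a::field ^ 'n) set"
  assumes "aff_subspace T" "aff_subspace A" "p \<in> T \<inter> A"
    "aff_dimension T \<le> aff_dimension (T \<inter> A)"
  shows "T \<subseteq> A"
proof -
  obtain DT where DT: "vec.subspace DT" "T = (\<lambda>v. p + v) ` DT" using aff_rebase assms by blast
  obtain DA where DA: "vec.subspace DA" "A = (\<lambda>v. p + v) ` DA" using aff_rebase assms by blast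
  have "T \<inter> A = (\<lambda>v. p + v) ` (DT \<inter> DA)" using DT DA translate_Int by blast
  then have "vec.dim DT \<le> vec.dim (DT \<inter> DA)"
    using assms(4) DT DA aff_dim_translate vec.subspace_inter by metis
  then have "DT \<inter> DA = DT"
    using vec.subspace_dim_equal[of "DT \<inter> DA" DT] DT DA vec.subspace_inter by blast
  then show ?thesis using DT DA by blast
qed

lemma translate_kspace:
  fixes U :: "('a::field ^ 'n) set"
  assumes "vec.subspace U" "vec.dim U = k"
  shows "kspace k ((\<lambda>v. x + v) ` U)"
  unfolding kspace_def aff_subspace_def using assms aff_dim_translate by blast

lemma part2:
  fixes S :: "('a::field ^ 'n) set set"
  assumes max: "maximal_tint_family k t S" and T: "\<forall>B\<in>S. meets_in t T B"
    and A: "kspace k A" "T \<subseteq> A"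
  shows "A \<in> S"
proof (rule ccontr)
  assume "A \<notin> S"
  then obtain B where B: "B \<in> S" "\<not> meets_in t A B" using max A unfolding maximal_tint_family_def by blast
  have "meets_in t T B" using T B by blast
  moreover have "T \<inter> B \<subseteq> A \<inter> B" using A by blast
  ultimately have "meets_in t A B" unfolding meets_in_def using aff_dim_mono
    by (metis bot.extremum_uniqueI le_trans)
  with B show False by simp
qed

theorem mainTheorem11:
  fixes S :: "('a::{field,finite} ^ 'n) set set" and k t :: nat
  assumes "k > t + 1" and "CARD('n) > 2 * k - t"
    and "maximal_tint_family k t S"
  shows "(t \<le> psi t S \<and> psi t S \<le> k
          \<and> (psi t S = t \<longrightarrow> (\<exists>P. kspace t P \<and> S = pencil k P)))
         \<and> (\<forall>T\<in>Tset t S. \<forall>A. kspace k A \<and> T \<subseteq> A \<longrightarrow> A \<in> S)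
         \<and> (\<forall>T1\<in>Tset t S. \<forall>T2\<in>Tset t S. meets_in t T1 T2)"
proof -
  note max = assms(3)
  have kn: "k < CARD('n)" and kn2: "2 * k < CARD('n) + t" using assms(1,2) by auto
  have P2: "\<forall>T\<in>Tset t S. \<forall>A. kspace k A \<and> T \<subseteq> A \<longrightarrow> A \<in> S"
    using part2[OF max] unfolding Tset_def by blast
  obtain U0 :: "('a ^ 'n) set" where U0: "vec.subspace U0" "vec.dim U0 = k"
    using ext_in[of "{0::'a^'n}" UNIV k] vec.subspace_single_0 vec.subspace_UNIV kn by (auto simp: vec_dim_card card_cart_basis)
  have "S \<noteq> {}"
  proof
    assume "S = {}"
    then show False using max translate_kspace[OF U0, of 0] unfolding maximal_tint_family_def by blast
  qed
  then obtain A0 where A0: "A0 \<in> S" by blast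
  have A0k: "kspace k A0" and meetsS: "\<forall>A\<in>S. \<forall>B\<in>S. meets_in t A B"
    using max A0 unfolding maximal_tint_family_def by auto
  have ex: "\<exists>T. aff_subspace T \<and> aff_dimension T = k \<and> (\<forall>A\<in>S. meets_in t T A)"
    using A0 A0k meetsS unfolding kspace_def by blast
  have psik: "psi t S \<le> k" unfolding psi_def by (rule Least_le) (rule ex)
  have exd: "\<exists>d. \<exists>T. aff_subspace T \<and> aff_dimension T = d \<and> (\<forall>A\<in>S. meets_in t T A)"
    using ex by blast
  obtain T0 where T0: "aff_subspace T0" "aff_dimension T0 = psi t S" "\<forall>A\<in>S. meets_in t T0 A"
    using LeastI_ex[OF exd] unfolding psi_def by blast
  have tpsi: "t \<le> psi t S"
  proof -
    have "meets_in t T0 A0" using T0 A0 by blast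
    then have "t \<le> aff_dimension (T0 \<inter> A0)" unfolding meets_in_def by simp
    also have "\<dots> \<le> aff_dimension T0" by (rule aff_dim_mono) blast
    finally show ?thesis using T0 by simp
  qed
  have P1c: "psi t S = t \<longrightarrow> (\<exists>P. kspace t P \<and> S = pencil k P)"
  proof
    assume pt: "psi t S = t"
    have T0k: "kspace t T0" using T0 pt unfolding kspace_def by simp
    have "S = pencil k T0"
    proof
      show "S \<subseteq> pencil k T0"
      proof
        fix A assume A: "A \<in> S"
        then have Ak: "kspace k A" using max unfolding maximal_tint_family_def by blast
        have m: "meets_in t T0 A" using T0 A by blast
        then obtain p where "p \<in> T0 \<inter> A" unfolding meets_in_def by blast
        then have "T0 \<subseteq> A" using aff_sub_eq[of T0 A p] T0 Ak m pt unfolding kspace_def meets_in_def by simp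
        then show "A \<in> pencil k T0" using Ak unfolding pencil_def by blast
      qed
      show "pencil k T0 \<subseteq> S"
        using part2[OF max T0(3)] unfolding pencil_def by blast
    qed
    then show "\<exists>P. kspace t P \<and> S = pencil k P" using T0k by blast
  qed
  have P3: "\<forall>T1\<in>Tset t S. \<forall>T2\<in>Tset t S. meets_in t T1 T2"
  proof (intro ballI)
    fix T1 T2 assume T1: "T1 \<in> Tset t S" and T2: "T2 \<in> Tset t S"
    have T1a: "aff_subspace T1" "aff_dimension T1 = psi t S" and T2a: "aff_subspace T2" "aff_dimension T2 = psi t S"
      using T1 T2 unfolding Tset_def kspace_def by auto
    have inS: "\<And>A T. T \<in> Tset t S \<Longrightarrow> kspace k A \<Longrightarrow> T \<subseteq> A \<Longrightarrow> A \<in> S" using P2 by blast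
    show "meets_in t T1 T2"
    proof (rule ccontr)
      assume nm: "\<not> meets_in t T1 T2"
      show False
      proof (cases "T1 \<inter> T2 = {}")
        case False
        then obtain p where p: "p \<in> T1" "p \<in> T2" by blast
        obtain D1 where D1: "vec.subspace D1" "T1 = (\<lambda>v. p + v) ` D1" using aff_rebase T1a p by blast
        obtain D2 where D2: "vec.subspace D2" "T2 = (\<lambda>v. p + v) ` D2" using aff_rebase T2a p by blast
        have dD1: "vec.dim D1 = psi t S" using D1 T1a aff_dim_translate by metis
        have dD2: "vec.dim D2 = psi t S" using D2 T2a aff_dim_translate by metis
        have I: "T1 \<inter> T2 = (\<lambda>v. p + v) ` (D1 \<inter> D2)" using D1 D2 translate_Int by blast
        have "vec.dim (D1 \<inter> D2) < t"
          using nm False I aff_dim_translate[OF vec.subspace_inter[OF D1(1) D2(1)]]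
          unfolding meets_in_def by simp
        then obtain U1 U2 where U: "vec.subspace U1" "vec.subspace U2" "D1 \<subseteq> U1" "D2 \<subseteq> U2"
          "vec.dim U1 = k" "vec.dim U2 = k" "vec.dim (U1 \<inter> U2) < t"
          using case_one[OF D1(1) D2(1), of k t] dD1 dD2 psik kn kn2 by auto
        define A1 where "A1 = (\<lambda>v. p + v) ` U1"
        define A2 where "A2 = (\<lambda>v. p + v) ` U2"
        have "A1 \<in> S" using inS[OF T1] translate_kspace[OF U(1,5)] D1 U(3) unfolding A1_def by blast
        moreover have "A2 \<in> S" using inS[OF T2] translate_kspace[OF U(2,6)] D2 U(4) unfolding A2_def by blast
        ultimately have "meets_in t A1 A2" using meetsS by blast
        moreover have "A1 \<inter> A2 = (\<lambda>v. p + v) ` (U1 \<inter> U2)" unfolding A1_def A2_def by (rule translate_Int)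
        ultimately show False
          using U(7) aff_dim_translate[OF vec.subspace_inter[OF U(1) U(2)]] unfolding meets_in_def by simp
      next
        case True
        obtain x1 D1 where D1: "vec.subspace D1" "T1 = (\<lambda>v. x1 + v) ` D1"
          using T1a unfolding aff_subspace_def by blast
        obtain x2 D2 where D2: "vec.subspace D2" "T2 = (\<lambda>v. x2 + v) ` D2"
          using T2a unfolding aff_subspace_def by blast
        have dD1: "vec.dim D1 = psi t S" using D1 T1a aff_dim_translate by metis
        have dD2: "vec.dim D2 = psi t S" using D2 T2a aff_dim_translate by metis
        define Sm where "Sm = {x + y |x y. x \<in> D1 \<and> y \<in> D2}"
        have Sms: "vec.subspace Sm" unfolding Sm_def using D1 D2 by (simp add: vec.subspace_sums)
        have v: "x2 - x1 \<notin> Sm"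
        proof
          assume "x2 - x1 \<in> Sm"
          then obtain a b where ab: "a \<in> D1" "b \<in> D2" "x2 - x1 = a + b" unfolding Sm_def by blast
          have "- b \<in> D2" using ab vec.subspace_neg[OF D2(1)] by blast
          moreover have "x1 + a = x2 + (- b)" using ab by (simp add: algebra_simps)
          ultimately have "x1 + a \<in> T1 \<inter> T2" using D1 D2 ab by blast
          with True show False by blast
        qed
        have "vec.dim Sm \<noteq> CARD('n)"
        proof
          assume "vec.dim Sm = CARD('n)"
          then have "Sm = UNIV" using vec.subspace_dim_equal[OF Sms vec.subspace_UNIV] by (simp add: card_cart_basis)
          with v show False by simp
        qed
        then have "vec.dim Sm \<le> CARD('n) - 1" using dim_subset_UNIV_cart_gen[of Sm] by linarith
        then obtain H where H: "vec.subspace H" "Sm \<subseteq> H" "x2 - x1 \<notin> H" "vec.dim H = CARD('n) - 1"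
          using ext_avoid[OF Sms v, of "CARD('n) - 1"] by auto
        have D1S: "D1 \<subseteq> Sm"
        proof
          fix a assume "a \<in> D1" then have "a + 0 \<in> Sm" unfolding Sm_def using vec.subspace_0[OF D2(1)] by blast
          then show "a \<in> Sm" by simp
        qed
        have D2S: "D2 \<subseteq> Sm"
        proof
          fix a assume "a \<in> D2" then have "0 + a \<in> Sm" unfolding Sm_def using vec.subspace_0[OF D1(1)] by blast
          then show "a \<in> Sm" by simp
        qed
        have kH: "k \<le> vec.dim H" using H(4) kn by linarith
        obtain U1 where U1: "vec.subspace U1" "D1 \<subseteq> U1" "U1 \<subseteq> H" "vec.dim U1 = k"
          using ext_in[OF D1(1) H(1) subset_trans[OF D1S H(2)] _ kH] dD1 psik by auto
        obtain U2 where U2: "vec.subspace U2" "D2 \<subseteq> U2" "U2 \<subseteq> H" "vec.dim U2 = k"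
          using ext_in[OF D2(1) H(1) subset_trans[OF D2S H(2)] _ kH] dD2 psik by auto
        define A1 where "A1 = (\<lambda>v. x1 + v) ` U1"
        define A2 where "A2 = (\<lambda>v. x2 + v) ` U2"
        have "A1 \<in> S" using inS[OF T1] translate_kspace[OF U1(1,4)] D1 U1(2) unfolding A1_def by blast
        moreover have "A2 \<in> S" using inS[OF T2] translate_kspace[OF U2(1,4)] D2 U2(2) unfolding A2_def by blast
        ultimately have "A1 \<inter> A2 \<noteq> {}" using meetsS unfolding meets_in_def by blast
        then obtain u1 u2 where u: "u1 \<in> U1" "u2 \<in> U2" "x1 + u1 = x2 + u2" unfolding A1_def A2_def by blast
        then have "x2 - x1 = u1 - u2" by (simp add: algebra_simps)
        moreover have "u1 - u2 \<in> H" using u U1(3) U2(3) vec.subspace_diff[OF H(1)] by blast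
        ultimately show False using H(3) by simp
      qed
    qed
  qed
  show ?thesis using tpsi psik P1c P2 P3 by blast
qed

end
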